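(* For all agents $a$, messages $M,M'$ and formulas $\phi,\psi$, the following formulas are valid: (1) $\mathsf{k}_a(a)$; (2) $(\mathsf{k}_a(M)\wedge\mathsf{k}_a(M'))\leftrightarrow\mathsf{k}_a((M,M'))$; (3) $[M]\mathsf{k}_{\mathsf{CM}}(M)$; (4) $[M](\phi\to\psi)\to([M]\phi\to[M]\psi)$; (5) $[M]\phi\to(\mathsf{k}_{\mathsf{CM}}(M)\to\phi)$; (6) $[M]\phi\to\langle M\rangle\phi$; (7) $\phi\to[M]\phi$. Moreover (8) if $\phi$ is valid then $[M]\phi$ is valid, and (9) if $\mathsf{k}_{\mathsf{CM}}(M)\to\mathsf{k}_{\mathsf{CM}}(M')$ is valid then $[M']\phi\to[M]\phi$ is valid.
   Context: Syntax. Fix a finite set $\mathcal{A}$ of agent names containing a distinguished name $\mathsf{CM}$. Messages: $M ::= a \mid B \mid (M,M)$ ($a\in\mathcal{A}$, $B$ optional data constants, pairs). $\mathcal{P}$ is a denumerable set of propositional variables containing atoms $\mathsf{k}_a(M)$. Formulas: $\phi ::= P \mid \phi\wedge\phi \mid \phi\vee\phi \mid \neg\phi \mid \phi\to\phi \mid [M]\phi$. Abbreviations: $\phi\leftrightarrow\psi:=(\phi\to\psi)\wedge(\psi\to\phi)$, $\langle M\rangle\phi:=\neg\neg(\mathsf{k}_{\mathsf{CM}}(M)\wedge\phi)$. Semantics. An LIiP-model is $(\mathcal{S},\sqsubseteq,\{R_M\}_M,\{D_a\}_{a\in\mathcal{A}},\mathcal{V})$ with $\mathcal{S}$ a nonempty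 set of states, $\sqsubseteq$ a partial order, $D_a(s)$ a set of messages per agent and state, $\mathrm{cl}_a(s)$ the smallest set of messages containing $a$ and $D_a(s)$ closed under pairing and taking components of pairs. $\mathcal{V}:\mathcal{P}\to 2^{\mathcal{S}}$ satisfies $\mathcal{V}(\mathsf{k}_a(M))=\{s: M\in\mathrm{cl}_a(s)\}$ and is upward closed along $\sqsubseteq$. $M\preceq M'$ iff for all $s$, $M\in\mathrm{cl}_{\mathsf{CM}}(s)$ implies $M'\in\mathrm{cl}_{\mathsf{CM}}(s)$. The $R_M$ satisfy: (i) $sR_Ms'$ implies $M\in\mathrm{cl}_{\mathsf{CM}}(s')$; (ii) $M\in\mathrm{cl}_{\mathsf{CM}}(s)$ implies $sR_Ms$; (iii) every $s$ has some $s'$ with $sR_Ms'$; (iv) $R_M\subseteq R_{\mathsf{CM}}={\sqsubseteq}$; (v) $sR_{\mathsf{CM}}t$ and $tR_Mu$ imply $sR_Mu$; (vi) $M\preceq M'$ implies $R_M\subseteq R_{M'}$. Satisfaction: atoms via $\mathcal{V}$; $\wedge,\vee$ classically; $s\models\neg\phi$ iff no $s'\sqsupseteq s$ satisfies $\phi$; $s\models\phi\to\psi$ iff every $s'\sqsupseteq s$ satisfying $\phi$ satisfies $\psi$; $s\models[M]\phi$ iff every $s'$ with $sR_Ms'$ satisfies $\phi$. Valid: true at every state of every LIiP-model. *)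

theory Defs
  imports Main
begin

datatype ('ag, 'b) msg = Ag 'ag | Dat 'b | MPair "('ag, 'b) msg" "('ag, 'b) msg"

text \<open>Formulas. Propositional variables are either the atoms k_a(M) (constructor K)
  or other propositional variables of type 'p.\<close>
datatype ('ag, 'b, 'p) form =
    PVar 'p
  | K 'ag "('ag, 'b) msg"
  | FAnd "('ag, 'b, 'p) form" "('ag, 'b, 'p) form"
  | FOr "('ag, 'b, 'p) form" "('ag, 'b, 'p) form"
  | FNeg "('ag, 'b, 'p) form"
  | FImp "('ag, 'b, 'p) form" "('ag, 'b, 'p) form"
  | Box "('ag, 'b) msg" "('ag, 'b, 'p) form"

definition FIff :: "('ag, 'b, 'p) form \<Rightarrow> ('ag, 'b, 'p) form \<Rightarrow> ('ag, 'b, 'p) form" where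
  "FIff \<phi> \<psi> = FAnd (FImp \<phi> \<psi>) (FImp \<psi> \<phi>)"

text \<open>Diamond, with the distinguished agent cm (= CM) as parameter.\<close>
definition Dia :: "'ag \<Rightarrow> ('ag, 'b) msg \<Rightarrow> ('ag, 'b, 'p) form \<Rightarrow> ('ag, 'b, 'p) form" where
  "Dia cm M \<phi> = FNeg (FNeg (FAnd (K cm M) \<phi>))"

text \<open>LIiP-model structure; the state set is the universe of type 's.\<close>
record ('s, 'ag, 'b, 'p) liip =
  le  :: "'s \<Rightarrow> 's \<Rightarrow> bool"
  rel :: "('ag, 'b) msg \<Rightarrow> 's \<Rightarrow> 's \<Rightarrow> bool"
  dom :: "'ag \<Rightarrow> 's \<Rightarrow> ('ag, 'b) msg set"
  val :: "'p \<Rightarrow> 's set"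

inductive_set cl :: "('s, 'ag, 'b, 'p) liip \<Rightarrow> 'ag \<Rightarrow> 's \<Rightarrow> ('ag, 'b) msg set"
  for m :: "('s, 'ag, 'b, 'p) liip" and a :: 'ag and s :: 's where
  cl_self: "Ag a \<in> cl m a s"
| cl_dom: "M \<in> dom m a s \<Longrightarrow> M \<in> cl m a s"
| cl_pair: "M \<in> cl m a s \<Longrightarrow> M' \<in> cl m a s \<Longrightarrow> MPair M M' \<in> cl m a s"
| cl_fst: "MPair M M' \<in> cl m a s \<Longrightarrow> M \<in> cl m a s"
| cl_snd: "MPair M M' \<in> cl m a s \<Longrightarrow> M' \<in> cl m a s"

definition msg_le :: "'ag \<Rightarrow> ('s, 'ag, 'b, 'p) liip \<Rightarrow> ('ag, 'b) msg \<Rightarrow> ('ag, 'b) msg \<Rightarrow> bool" where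
  "msg_le cm m M M' \<longleftrightarrow> (\<forall>s. M \<in> cl m cm s \<longrightarrow> M' \<in> cl m cm s)"

definition is_liip :: "'ag \<Rightarrow> ('s, 'ag, 'b, 'p) liip \<Rightarrow> bool" where
  "is_liip cm m \<longleftrightarrow>
     \<comment> \<open>partial order\<close>
     (\<forall>s. le m s s) \<and>
     (\<forall>s t u. le m s t \<longrightarrow> le m t u \<longrightarrow> le m s u) \<and>
     (\<forall>s t. le m s t \<longrightarrow> le m t s \<longrightarrow> s = t) \<and>
     \<comment> \<open>valuation upward closed (for all atoms, including k_a(M))\<close>
     (\<forall>p s t. s \<in> val m p \<longrightarrow> le m s t \<longrightarrow> t \<in> val m p) \<and>
     (\<forall>a M s t. M \<in> cl m a s \<longrightarrow> le m s t \<longrightarrow> M \<in> cl m a t) \<and>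
     \<comment> \<open>(i)-(vi)\<close>
     (\<forall>M s s'. rel m M s s' \<longrightarrow> M \<in> cl m cm s') \<and>
     (\<forall>M s. M \<in> cl m cm s \<longrightarrow> rel m M s s) \<and>
     (\<forall>M s. \<exists>s'. rel m M s s') \<and>
     (\<forall>M s t. rel m M s t \<longrightarrow> le m s t) \<and>
     rel m (Ag cm) = le m \<and>
     (\<forall>M s t u. rel m (Ag cm) s t \<longrightarrow> rel m M t u \<longrightarrow> rel m M s u) \<and>
     (\<forall>M M'. msg_le cm m M M' \<longrightarrow> (\<forall>s t. rel m M s t \<longrightarrow> rel m M' s t))"

fun sat :: "'ag \<Rightarrow> ('s, 'ag, 'b, 'p) liip \<Rightarrow> 's \<Rightarrow> ('ag, 'b, 'p) form \<Rightarrow> bool" where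
  "sat cm m s (PVar p) \<longleftrightarrow> s \<in> val m p"
| "sat cm m s (K a M) \<longleftrightarrow> M \<in> cl m a s"
| "sat cm m s (FAnd \<phi> \<psi>) \<longleftrightarrow> sat cm m s \<phi> \<and> sat cm m s \<psi>"
| "sat cm m s (FOr \<phi> \<psi>) \<longleftrightarrow> sat cm m s \<phi> \<or> sat cm m s \<psi>"
| "sat cm m s (FNeg \<phi>) \<longleftrightarrow> (\<forall>s'. le m s s' \<longrightarrow> \<not> sat cm m s' \<phi>)"
| "sat cm m s (FImp \<phi> \<psi>) \<longleftrightarrow> (\<forall>s'. le m s s' \<longrightarrow> sat cm m s' \<phi> \<longrightarrow> sat cm m s' \<psi>)"
| "sat cm m s (Box M \<phi>) \<longleftrightarrow> (\<forall>s'. rel m M s s' \<longrightarrow> sat cm m s' \<phi>)"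

definition valid :: "'s itself \<Rightarrow> 'ag \<Rightarrow> ('ag, 'b, 'p) form \<Rightarrow> bool" where
  "valid _ cm \<phi> \<longleftrightarrow> (\<forall>m :: ('s, 'ag, 'b, 'p) liip. is_liip cm m \<longrightarrow> (\<forall>s. sat cm m s \<phi>))"

end

theory Submission
  imports Defs
begin

lemma liip_conj: "is_liip cm m \<Longrightarrow>
     (\<forall>s. le m s s) \<and>
     (\<forall>s t u. le m s t \<longrightarrow> le m t u \<longrightarrow> le m s u) \<and>
     (\<forall>s t. le m s t \<longrightarrow> le m t s \<longrightarrow> s = t) \<and>
     (\<forall>p s t. s \<in> val m p \<longrightarrow> le m s t \<longrightarrow> t \<in> val m p) \<and>
     (\<forall>a M s t. M \<in> cl m a s \<longrightarrow> le m s t \<longrightarrow> M \<in> cl m a t) \<and>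
     (\<forall>M s s'. rel m M s s' \<longrightarrow> M \<in> cl m cm s') \<and>
     (\<forall>M s. M \<in> cl m cm s \<longrightarrow> rel m M s s) \<and>
     (\<forall>M s. \<exists>s'. rel m M s s') \<and>
     (\<forall>M s t. rel m M s t \<longrightarrow> le m s t) \<and>
     rel m (Ag cm) = le m \<and>
     (\<forall>M s t u. rel m (Ag cm) s t \<longrightarrow> rel m M t u \<longrightarrow> rel m M s u) \<and>
     (\<forall>M M'. msg_le cm m M M' \<longrightarrow> (\<forall>s t. rel m M s t \<longrightarrow> rel m M' s t))"
  unfolding is_liip_def .

context fixes cm and m :: "('s, 'ag, 'b, 'p) liip" assumes L: "is_liip cm m" begin
lemmas LC = liip_conj[OF L]
lemma liip_refl: "le m s s" using LC[THEN conjunct1] by blast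
lemma liip_trans: "le m s t \<Longrightarrow> le m t u \<Longrightarrow> le m s u"
  using LC[THEN conjunct2, THEN conjunct1] by blast
lemma liip_val: "s \<in> val m p \<Longrightarrow> le m s t \<Longrightarrow> t \<in> val m p"
  using LC[THEN conjunct2, THEN conjunct2, THEN conjunct2, THEN conjunct1] by blast
lemma liip_cl: "M \<in> cl m a s \<Longrightarrow> le m s t \<Longrightarrow> M \<in> cl m a t"
  using LC[THEN conjunct2, THEN conjunct2, THEN conjunct2, THEN conjunct2, THEN conjunct1] by blast
lemma liip_i: "rel m M s s' \<Longrightarrow> M \<in> cl m cm s'"
  using LC[THEN conjunct2, THEN conjunct2, THEN conjunct2, THEN conjunct2, THEN conjunct2, THEN conjunct1] by blast
lemma liip_ii: "M \<in> cl m cm s \<Longrightarrow> rel m M s s"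
  using LC[THEN conjunct2, THEN conjunct2, THEN conjunct2, THEN conjunct2, THEN conjunct2, THEN conjunct2, THEN conjunct1] by blast
lemma liip_iii: "\<exists>s'. rel m M s s'"
  using LC[THEN conjunct2, THEN conjunct2, THEN conjunct2, THEN conjunct2, THEN conjunct2, THEN conjunct2, THEN conjunct2, THEN conjunct1] by blast
lemma liip_iv: "rel m M s t \<Longrightarrow> le m s t"
  using LC[THEN conjunct2, THEN conjunct2, THEN conjunct2, THEN conjunct2, THEN conjunct2, THEN conjunct2, THEN conjunct2, THEN conjunct2, THEN conjunct1] by blast
lemma liip_eq: "rel m (Ag cm) = le m"
  using LC[THEN conjunct2, THEN conjunct2, THEN conjunct2, THEN conjunct2, THEN conjunct2, THEN conjunct2, THEN conjunct2, THEN conjunct2, THEN conjunct2, THEN conjunct1] .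
lemma liip_v0: "rel m (Ag cm) s t \<Longrightarrow> rel m M t u \<Longrightarrow> rel m M s u"
  using LC[THEN conjunct2, THEN conjunct2, THEN conjunct2, THEN conjunct2, THEN conjunct2, THEN conjunct2, THEN conjunct2, THEN conjunct2, THEN conjunct2, THEN conjunct2, THEN conjunct1] by blast
lemma liip_v: "le m s t \<Longrightarrow> rel m M t u \<Longrightarrow> rel m M s u"
  using liip_v0 liip_eq by metis
lemma liip_vi: "msg_le cm m M M' \<Longrightarrow> rel m M s t \<Longrightarrow> rel m M' s t"
  using LC[THEN conjunct2, THEN conjunct2, THEN conjunct2, THEN conjunct2, THEN conjunct2, THEN conjunct2, THEN conjunct2, THEN conjunct2, THEN conjunct2, THEN conjunct2, THEN conjunct2] by blast
end
lemma sat_mono: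
  assumes L: "is_liip cm m"
  shows "sat cm m s \<phi> \<Longrightarrow> le m s t \<Longrightarrow> sat cm m t \<phi>"
proof (induction \<phi> arbitrary: s t)
  case (PVar p) thus ?case using liip_val[OF L] by simp
next
  case (K a M) thus ?case using liip_cl[OF L] by simp
next
  case (FAnd x y) thus ?case by (simp only: sat.simps) blast
next
  case (FOr x y) thus ?case by (simp only: sat.simps) blast
next
  case (FNeg x) thus ?case using liip_trans[OF L] by (simp only: sat.simps) blast
next
  case (FImp x y) thus ?case using liip_trans[OF L] by (simp only: sat.simps) blast
next
  case (Box M x) thus ?case using liip_v[OF L] by (simp only: sat.simps) blast
qed

lemma cl_sub: "x \<in> cl m1 a s \<Longrightarrow> dom m1 = dom m2 \<Longrightarrow> x \<in> cl m2 a s"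
proof (induction rule: cl.induct)
  case cl_self show ?case by (rule cl.cl_self)
next
  case (cl_dom M) thus ?case by (simp add: cl.cl_dom)
next
  case (cl_pair M M') thus ?case by (simp add: cl.cl_pair)
next
  case (cl_fst M M') thus ?case using cl.cl_fst by metis
next
  case (cl_snd M M') thus ?case using cl.cl_snd by metis
qed

lemma cl_eq: "dom m1 = dom m2 \<Longrightarrow> cl m1 = cl m2"
proof (intro ext set_eqI iffI)
  fix a s x
  assume h: "dom m1 = dom m2"
  { assume "x \<in> cl m1 a s" thus "x \<in> cl m2 a s" by (rule cl_sub[OF _ h]) }
  { assume "x \<in> cl m2 a s" thus "x \<in> cl m1 a s" by (rule cl_sub[OF _ h[symmetric]]) }
qed

definition retype :: "('s, 'ag, 'b, 'p) liip \<Rightarrow> ('s, 'ag, 'b, 'q) liip" where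
  "retype m = \<lparr>le = le m, rel = rel m, dom = dom m, val = (\<lambda>_. {})\<rparr>"

lemma cl_retype: "cl (retype m) = cl m"
  by (rule cl_eq) (simp add: retype_def)

lemma retype_sel: "le (retype m) = le m" "rel (retype m) = rel m" "dom (retype m) = dom m"
  "val (retype m) = (\<lambda>_. {})"
  by (simp_all add: retype_def)

lemma msg_le_retype: "msg_le cm (retype m) M M' = msg_le cm m M M'"
  unfolding msg_le_def cl_retype ..

lemma liip_antisym: assumes "is_liip cm m" "le m s t" "le m t s" shows "s = t"
  using liip_conj[OF assms(1), THEN conjunct2, THEN conjunct2, THEN conjunct1] assms(2,3) by blast

lemma is_liip_retype: assumes L: "is_liip cm m" shows "is_liip cm (retype m)"
  unfolding is_liip_def msg_le_retype cl_retype retype_sel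
  apply (intro conjI allI impI)
  subgoal by (rule liip_refl[OF L])
  subgoal by (erule (1) liip_trans[OF L])
  subgoal by (erule (1) liip_antisym[OF L])
  subgoal by (erule emptyE)
  subgoal by (erule (1) liip_cl[OF L])
  subgoal by (erule liip_i[OF L])
  subgoal by (erule liip_ii[OF L])
  subgoal by (rule liip_iii[OF L])
  subgoal by (erule liip_iv[OF L])
  subgoal by (rule liip_eq[OF L])
  subgoal by (erule (1) liip_v0[OF L])
  subgoal by (erule (1) liip_vi[OF L])
  done

theorem proposition4:
  fixes cm a :: "'ag::finite" and M M' :: "('ag, 'b) msg"
    and \<phi> \<psi> :: "('ag, 'b, 'p) form"
  shows "valid TYPE('s) cm (K a (Ag a)) \<and>
    valid TYPE('s) cm (FIff (FAnd (K a M) (K a M')) (K a (MPair M M'))) \<and>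
    valid TYPE('s) cm (Box M (K cm M)) \<and>
    valid TYPE('s) cm (FImp (Box M (FImp \<phi> \<psi>)) (FImp (Box M \<phi>) (Box M \<psi>))) \<and>
    valid TYPE('s) cm (FImp (Box M \<phi>) (FImp (K cm M) \<phi>)) \<and>
    valid TYPE('s) cm (FImp (Box M \<phi>) (Dia cm M \<phi>)) \<and>
    valid TYPE('s) cm (FImp \<phi> (Box M \<phi>)) \<and>
    (valid TYPE('s) cm \<phi> \<longrightarrow> valid TYPE('s) cm (Box M \<phi>)) \<and>
    (valid TYPE('s) cm (FImp (K cm M) (K cm M')) \<longrightarrow>
       valid TYPE('s) cm (FImp (Box M' \<phi>) (Box M \<phi>)))"
proof (intro conjI impI)
  show "valid TYPE('s) cm (K a (Ag a))" unfolding valid_def by (simp add: cl.cl_self)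
  show "valid TYPE('s) cm (FIff (FAnd (K a M) (K a M')) (K a (MPair M M')))"
    unfolding valid_def FIff_def by (auto intro: cl.cl_pair dest: cl.cl_fst cl.cl_snd)
  show "valid TYPE('s) cm (Box M (K cm M))" unfolding valid_def using liip_i by auto
  show "valid TYPE('s) cm (FImp (Box M (FImp \<phi> \<psi>)) (FImp (Box M \<phi>) (Box M \<psi>)))"
    unfolding valid_def
  proof (intro allI impI, simp, intro allI impI)
    fix m :: "('s, 'ag, 'b, 'p) liip" and s s' s'' t
    assume L: "is_liip cm m" and h: "le m s s'"
      and b1: "\<forall>u. rel m M s' u \<longrightarrow> (\<forall>v. le m u v \<longrightarrow> sat cm m v \<phi> \<longrightarrow> sat cm m v \<psi>)"
      and h2: "le m s' s''" and b2: "\<forall>u. rel m M s'' u \<longrightarrow> sat cm m u \<phi>" and r: "rel m M s'' t"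
    have "rel m M s' t" using liip_v[OF L h2 r] .
    moreover have "le m t t" using liip_refl[OF L] .
    ultimately show "sat cm m t \<psi>" using b1 b2 r by blast
  qed
  show "valid TYPE('s) cm (FImp (Box M \<phi>) (FImp (K cm M) \<phi>))"
    unfolding valid_def
  proof (intro allI impI, simp, intro allI impI)
    fix m :: "('s, 'ag, 'b, 'p) liip" and s s' s''
    assume L: "is_liip cm m" and b: "\<forall>u. rel m M s' u \<longrightarrow> sat cm m u \<phi>"
      and h2: "le m s' s''" and k: "M \<in> cl m cm s''"
    have "rel m M s'' s''" using liip_ii[OF L k] .
    hence "rel m M s' s''" using liip_v[OF L h2] by blast
    thus "sat cm m s'' \<phi>" using b by blast
  qed
  show "valid TYPE('s) cm (FImp (Box M \<phi>) (Dia cm M \<phi>))"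
    unfolding valid_def Dia_def
  proof (intro allI impI, simp, intro allI impI)
    fix m :: "('s, 'ag, 'b, 'p) liip" and s s' u
    assume L: "is_liip cm m" and b: "\<forall>u. rel m M s' u \<longrightarrow> sat cm m u \<phi>"
      and h2: "le m s' u"
    obtain v where r: "rel m M u v" using liip_iii[OF L] by blast
    have "rel m M s' v" using liip_v[OF L h2 r] .
    moreover have "le m u v" "M \<in> cl m cm v" using liip_iv[OF L r] liip_i[OF L r] by auto
    ultimately show "\<exists>v. le m u v \<and> M \<in> cl m cm v \<and> sat cm m v \<phi>" using b by blast
  qed
  show "valid TYPE('s) cm (FImp \<phi> (Box M \<phi>))"
    unfolding valid_def
  proof (intro allI impI, simp, intro allI impI)
    fix m :: "('s, 'ag, 'b, 'p) liip" and s s' t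
    assume L: "is_liip cm m" and p: "sat cm m s' \<phi>" and r: "rel m M s' t"
    have "le m s' t" using liip_iv[OF L r] .
    thus "sat cm m t \<phi>" using sat_mono[OF L p] by blast
  qed
  show "valid TYPE('s) cm (Box M \<phi>)" if "valid TYPE('s) cm \<phi>"
    using that unfolding valid_def by auto
  show "valid TYPE('s) cm (FImp (Box M' \<phi>) (Box M \<phi>))"
    if v: "valid TYPE('s) cm (FImp (K cm M) (K cm M'))"
    unfolding valid_def
  proof (intro allI impI, simp, intro allI impI)
    fix m :: "('s, 'ag, 'b, 'p) liip" and s s' t
    assume L: "is_liip cm m" and b: "\<forall>u. rel m M' s' u \<longrightarrow> sat cm m u \<phi>"
      and r: "rel m M s' t"
    have "msg_le cm m M M'" unfolding msg_le_def
    proof (intro allI impI)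
      fix x assume xm: "M \<in> cl m cm x"
      show "M' \<in> cl m cm x"
        using v[unfolded valid_def, rule_format, OF is_liip_retype[OF L], of x] xm liip_refl[OF L]
        by (simp add: cl_retype retype_sel)
    qed
    hence "rel m M' s' t" using liip_vi[OF L _ r] by blast
    thus "sat cm m t \<phi>" using b by blast
  qed
qed

end
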